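(* Fix $P>0$ and $\sigma>0$ and let $\lambda_n:=2\Phi(-\log n)$. For every sufficiently large $n$ there exists an $(n,N,\lambda_n,\lambda_n)$ DI code for the AWGN channel with noise standard deviation $\sigma$ and power constraint $P$ whose code words $u_1,\dots,u_N$ form a $d$-angle-dense arrangement on the sphere $\{x\in\mathbb{R}^n:\|x\|=\sqrt{nP}\}$ with $d=2\sigma\log n$, whose decoding sets are \[ \mathcal{D}_i=\{y\in\mathbb{R}^n:\ \|\Pi_{\vec u_i}\vec y-\vec u_i\|\le \sigma\log n\}, \] and which satisfies $\frac{\log N}{n\log n}\ge \frac14-o(1)$ as $n\to\infty$. In particular, since $\lambda_n\to0$, the linearithmic rate $\dot R=\frac14$ is achievable.
   Context: AWGN channel: on input $x^n\in\mathbb{R}^n$ the output is $Y^n=x^n+\sigma Z^n$ with $Z^n$ having i.i.d. $\mathcal{N}(0,1)$ components; i.e. the output distribution is $\mathcal{G}_{x^n}=\mathcal{N}(x^n,\sigma^2 I_n)$. Admissible inputs satisfy the power constraint $\|x^n\|^2\le nP$. An $(n,N,\lambda_1,\lambda_2)$ DI (deterministic identification) code is a family $\{(u_i,\mathcal{D}_i)\}_{i=1}^N$ of admissible input sequences $u_i\in\mathbb{R}^n$ and measurable sets $\mathcal{D}_i\subseteq\mathbb{R}^n$ such that for all $i\neq j$: $\mathcal{G}_{u_i}(\mathcal{D}_i)\ge 1-\lambda_1$ and $\mathcal{G}_{u_j}(\mathcal{D}_i)\le\lambda_2$. A number $\dot R>0$ is an achievable linearithmic rate if for every $\epsilon>0$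 there are $n_0$ and $(n,N^{(n)},\lambda_1^{(n)},\lambda_2^{(n)})$ DI codes for all $n\ge n_0$ with $\lambda_1^{(n)},\lambda_2^{(n)}\to0$ and $\frac{\log N^{(n)}}{n\log n}\ge \dot R-\epsilon$. $\Phi$ is the standard Gaussian cumulative distribution function. $\Pi_{\vec a}\vec v:=\frac{(\vec a,\vec v)}{\|\vec a\|^2}\vec a$ is orthogonal projection onto the line spanned by $\vec a\neq0$. An arrangement $\{u_j\}$ on a sphere centred at the origin is $d$-angle-dense if $\|\Pi_{\vec u_k}\vec u_j-\vec u_k\|\ge d$ for all $j\neq k$. Logarithms are to base 2. *)

theory Defs
  imports "HOL-Probability.Probability"
begin

text \<open>Vectors of R^n are represented as functions nat => real; only the
coordinates 0..n-1 matter. The output space R^n is the space of the product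
measure over the index set {..<n}.\<close>

definition Rn :: "nat \<Rightarrow> (nat \<Rightarrow> real) set" where
  "Rn n = PiE {..<n} (\<lambda>_. (UNIV :: real set))"

definition inner_n :: "nat \<Rightarrow> (nat \<Rightarrow> real) \<Rightarrow> (nat \<Rightarrow> real) \<Rightarrow> real" where
  "inner_n n x y = (\<Sum>i<n. x i * y i)"

definition norm_n :: "nat \<Rightarrow> (nat \<Rightarrow> real) \<Rightarrow> real" where
  "norm_n n x = sqrt (inner_n n x x)"

definition proj_n :: "nat \<Rightarrow> (nat \<Rightarrow> real) \<Rightarrow> (nat \<Rightarrow> real) \<Rightarrow> (nat \<Rightarrow> real)" where
  "proj_n n a v = (\<lambda>i. (inner_n n a v / inner_n n a a) * a i)"

definition gauss_out :: "nat \<Rightarrow> real \<Rightarrow> (nat \<Rightarrow> real) \<Rightarrow> (nat \<Rightarrow> real) measure" where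
  "gauss_out n \<sigma> x = PiM {..<n} (\<lambda>i. density lborel (normal_density (x i) \<sigma>))"

definition Phi :: "real \<Rightarrow> real" where
  "Phi t = measure (density lborel std_normal_density) {..t}"

definition DI_code :: "nat \<Rightarrow> real \<Rightarrow> real \<Rightarrow> nat \<Rightarrow> real \<Rightarrow> real \<Rightarrow>
    (nat \<Rightarrow> nat \<Rightarrow> real) \<Rightarrow> (nat \<Rightarrow> (nat \<Rightarrow> real) set) \<Rightarrow> bool" where
  "DI_code n P \<sigma> N l1 l2 u D \<longleftrightarrow>
     (\<forall>i<N. (norm_n n (u i))\<^sup>2 \<le> real n * P) \<and>
     (\<forall>i<N. D i \<in> sets (gauss_out n \<sigma> (u i))) \<and>
     (\<forall>i<N. measure (gauss_out n \<sigma> (u i)) (D i) \<ge> 1 - l1) \<and>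
     (\<forall>i<N. \<forall>j<N. i \<noteq> j \<longrightarrow> measure (gauss_out n \<sigma> (u j)) (D i) \<le> l2)"

definition angle_dense :: "nat \<Rightarrow> nat \<Rightarrow> (nat \<Rightarrow> nat \<Rightarrow> real) \<Rightarrow> real \<Rightarrow> bool" where
  "angle_dense n N u d \<longleftrightarrow>
     (\<forall>j<N. \<forall>k<N. j \<noteq> k \<longrightarrow> norm_n n (\<lambda>i. proj_n n (u k) (u j) i - u k i) \<ge> d)"

definition achievable_lin_rate :: "real \<Rightarrow> real \<Rightarrow> real \<Rightarrow> bool" where
  "achievable_lin_rate P \<sigma> R \<longleftrightarrow> R > 0 \<and>
     (\<forall>\<epsilon>>0. \<exists>n0 (l1::nat\<Rightarrow>real) (l2::nat\<Rightarrow>real).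
        l1 \<longlonglongrightarrow> 0 \<and> l2 \<longlonglongrightarrow> 0 \<and>
        (\<forall>n\<ge>n0. \<exists>N u D. DI_code n P \<sigma> N (l1 n) (l2 n) u D \<and>
           log 2 (real N) / (real n * log 2 (real n)) \<ge> R - \<epsilon>))"

end

theory Submission
  imports Defs "HOL-Real_Asymp.Real_Asymp"
begin
lemma coord_distr:
  assumes "\<sigma> > 0" "k < n"
  shows "distributed (gauss_out n \<sigma> x) lborel (\<lambda>y. y k) (normal_density (x k) \<sigma>)"
proof -
  have ps: "\<And>i. prob_space (density lborel (normal_density (x i) \<sigma>))"
    using assms(1) by (rule prob_space_normal_density)
  have "distr (gauss_out n \<sigma> x) (density lborel (normal_density (x k) \<sigma>)) (\<lambda>y. y k)
        = density lborel (normal_density (x k) \<sigma>)"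
    unfolding gauss_out_def using assms by (intro distr_PiM_component ps) auto
  moreover have "distr (gauss_out n \<sigma> x) lborel (\<lambda>y. y k) = distr (gauss_out n \<sigma> x) (density lborel (normal_density (x k) \<sigma>)) (\<lambda>y. y k)"
    by (rule distr_cong) auto
  ultimately show ?thesis
    unfolding distributed_def gauss_out_def using assms
    by (auto simp: measurable_component_singleton)
qed

lemma prob_gauss: "\<sigma> > 0 \<Longrightarrow> prob_space (gauss_out n \<sigma> x)"
  unfolding gauss_out_def by (intro prob_space_PiM prob_space_normal_density)

lemma coord_indep:
  assumes "\<sigma> > 0" "n > 0"
  shows "prob_space.indep_vars (gauss_out n \<sigma> x) (\<lambda>_. borel) (\<lambda>k y. y k) {..<n}"
proof -
  interpret prob_space "gauss_out n \<sigma> x" using prob_gauss[OF assms(1)] .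
  have ps: "\<And>i. prob_space (density lborel (normal_density (x i) \<sigma>))"
    using assms(1) by (rule prob_space_normal_density)
  have rv: "\<And>i. i \<in> {..<n} \<Longrightarrow> random_variable borel (\<lambda>y. y i)"
    unfolding gauss_out_def by (auto intro!: measurable_component_singleton[THEN measurable_compose] simp: measurable_component_singleton)
  have e1: "distr (gauss_out n \<sigma> x) (\<Pi>\<^sub>M i\<in>{..<n}. borel) (\<lambda>y. \<lambda>i\<in>{..<n}. y i) = gauss_out n \<sigma> x"
  proof -
    have "distr (gauss_out n \<sigma> x) (\<Pi>\<^sub>M i\<in>{..<n}. borel) (\<lambda>y. \<lambda>i\<in>{..<n}. y i)
       = distr (gauss_out n \<sigma> x) (gauss_out n \<sigma> x) (\<lambda>y. y)"
      apply (rule distr_cong)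
        apply (simp add: gauss_out_def)
       apply (unfold gauss_out_def, rule sets_PiM_cong, simp, simp)
      apply (auto simp: gauss_out_def space_PiM PiE_def extensional_def restrict_def fun_eq_iff)
      done
    also have "\<dots> = gauss_out n \<sigma> x" by (simp add: distr_id2)
    finally show ?thesis .
  qed
  have e2: "(\<Pi>\<^sub>M i\<in>{..<n}. distr (gauss_out n \<sigma> x) borel (\<lambda>y. y i)) = gauss_out n \<sigma> x"
  proof -
    have "\<And>i. i \<in> {..<n} \<Longrightarrow> distr (gauss_out n \<sigma> x) borel (\<lambda>y. y i) = density lborel (normal_density (x i) \<sigma>)"
    proof -
      fix i assume i: "i \<in> {..<n}"
      have "distr (gauss_out n \<sigma> x) borel (\<lambda>y. y i) = distr (gauss_out n \<sigma> x) (density lborel (normal_density (x i) \<sigma>)) (\<lambda>y. y i)"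
        by (rule distr_cong) auto
      also have "\<dots> = density lborel (normal_density (x i) \<sigma>)"
        unfolding gauss_out_def using i by (intro distr_PiM_component ps) auto
      finally show "distr (gauss_out n \<sigma> x) borel (\<lambda>y. y i) = density lborel (normal_density (x i) \<sigma>)" .
    qed
    then show ?thesis unfolding gauss_out_def by (intro PiM_cong) auto
  qed
  show ?thesis
    using assms(2) by (subst indep_vars_iff_distr_eq_PiM') (auto simp: rv e1 e2)
qed

lemma lin_distr:
  assumes "\<sigma> > 0" "n > 0" "\<And>k. k < n \<Longrightarrow> a k \<noteq> 0"
  shows "distributed (gauss_out n \<sigma> x) lborel (\<lambda>y. inner_n n a y)
           (normal_density (inner_n n a x) (\<sigma> * sqrt (inner_n n a a)))"
proof -
  interpret prob_space "gauss_out n \<sigma> x" using prob_gauss[OF assms(1)] .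
  have ind: "indep_vars (\<lambda>_. borel) (\<lambda>k y. a k * y k) {..<n}"
    by (rule indep_vars_compose2[OF coord_indep[OF assms(1,2)]]) auto
  have d: "\<And>k. k \<in> {..<n} \<Longrightarrow> distributed (gauss_out n \<sigma> x) lborel (\<lambda>y. a k * y k)
        (normal_density (a k * x k) (\<bar>a k\<bar> * \<sigma>))"
  proof -
    fix k assume k: "k \<in> {..<n}"
    show "distributed (gauss_out n \<sigma> x) lborel (\<lambda>y. a k * y k)
        (normal_density (a k * x k) (\<bar>a k\<bar> * \<sigma>))"
      using normal_density_affine[OF coord_distr[OF assms(1), of k n x] assms(1), of "a k" 0] assms k by auto
  qed
  have "distributed (gauss_out n \<sigma> x) lborel (\<lambda>y. \<Sum>k\<in>{..<n}. a k * y k)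
        (normal_density (\<Sum>k\<in>{..<n}. a k * x k) (sqrt (\<Sum>k\<in>{..<n}. (\<bar>a k\<bar> * \<sigma>)\<^sup>2)))"
    using assms by (intro sum_indep_normal ind d) auto
  moreover have "sqrt (\<Sum>k\<in>{..<n}. (\<bar>a k\<bar> * \<sigma>)\<^sup>2) = \<sigma> * sqrt (inner_n n a a)"
  proof -
    have "(\<Sum>k\<in>{..<n}. (\<bar>a k\<bar> * \<sigma>)\<^sup>2) = \<sigma>\<^sup>2 * inner_n n a a"
      by (simp add: inner_n_def sum_distrib_left power_mult_distrib power2_eq_square)
         (rule sum.cong, simp, simp add: algebra_simps abs_mult_self_eq)
    then show ?thesis using assms(1) by (simp add: real_sqrt_mult)
  qed
  ultimately show ?thesis unfolding inner_n_def by simp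
qed

lemma std_le:
  assumes "prob_space M" "distributed M lborel V std_normal_density"
  shows "measure M {y\<in>space M. V y \<le> t} = Phi t"
proof -
  have m: "V \<in> measurable M lborel" using assms(2) by (rule distributed_measurable)
  have "measure M {y\<in>space M. V y \<le> t} = measure M (V -` {..t} \<inter> space M)"
    by (rule arg_cong[where f="measure M"]) auto
  also have "\<dots> = measure (distr M lborel V) {..t}"
    using m by (subst measure_distr) auto
  also have "distr M lborel V = density lborel std_normal_density"
    using assms(2) by (rule distributed_distr_eq_density)
  finally show ?thesis unfolding Phi_def .
qed

lemma std_neg:
  assumes "prob_space M" "distributed M lborel V std_normal_density"
  shows "distributed M lborel (\<lambda>y. - V y) std_normal_density"
  using prob_space.normal_density_affine[OF assms(1) assms(2), of "-1" 0] by simp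

lemma norm_proj:
  "norm_n n (\<lambda>k. proj_n n u y k - u k) = \<bar>inner_n n u y / inner_n n u u - 1\<bar> * sqrt (inner_n n u u)"
proof -
  have "inner_n n (\<lambda>k. proj_n n u y k - u k) (\<lambda>k. proj_n n u y k - u k)
     = (inner_n n u y / inner_n n u u - 1)\<^sup>2 * inner_n n u u"
  proof -
    define c where "c = inner_n n u y / inner_n n u u"
    have e: "(\<lambda>k. proj_n n u y k - u k) = (\<lambda>k. (c - 1) * u k)"
      unfolding proj_n_def c_def by (simp add: algebra_simps)
    show ?thesis unfolding e c_def[symmetric] unfolding inner_n_def
      by (simp add: sum_distrib_left power2_eq_square mult_ac)
  qed
  then show ?thesis unfolding norm_n_def by (simp add: real_sqrt_mult)
qed

lemma Rn_space: "space (gauss_out n \<sigma> x) = Rn n"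
  unfolding gauss_out_def Rn_def by (simp add: space_PiM)

lemma decode:
  assumes s: "\<sigma> > 0" and n: "n > 0" and nz: "\<And>k. k < n \<Longrightarrow> u k \<noteq> 0"
    and L: "L \<ge> 0"
    and D: "D = {y \<in> Rn n. norm_n n (\<lambda>k. proj_n n u y k - u k) \<le> \<sigma> * L}"
  shows "D \<in> sets (gauss_out n \<sigma> x)"
    and "x = u \<Longrightarrow> measure (gauss_out n \<sigma> x) D \<ge> 1 - 2 * Phi (- L)"
    and "inner_n n u x \<le> inner_n n u u - 2 * \<sigma> * sqrt (inner_n n u u) * L \<Longrightarrow>
           measure (gauss_out n \<sigma> x) D \<le> 2 * Phi (- L)"
proof -
  define M where "M = gauss_out n \<sigma> x"
  interpret prob_space M unfolding M_def using prob_gauss[OF s] .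
  define r where "r = sqrt (inner_n n u u)"
  have "inner_n n u u > 0"
  proof -
    have "0 < u 0 * u 0" using nz[of 0] n by (auto simp: zero_less_mult_iff linorder_neq_iff)
    also have "\<dots> \<le> inner_n n u u" unfolding inner_n_def
      using n by (intro member_le_sum) auto
    finally show ?thesis .
  qed
  then have r: "r > 0" "r\<^sup>2 = inner_n n u u" unfolding r_def by auto
  define W where "W = (\<lambda>y. inner_n n u y)"
  define \<mu> where "\<mu> = inner_n n u x"
  have dW: "distributed M lborel W (normal_density \<mu> (\<sigma> * r))"
    unfolding M_def W_def \<mu>_def r_def using lin_distr[of \<sigma> n u x] s n nz by blast
  have Wm[measurable]: "W \<in> borel_measurable M"
    using distributed_measurable[OF dW] by simp
  define V where "V = (\<lambda>y. (W y - \<mu>) / (\<sigma> * r))"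
  have dV: "distributed M lborel V std_normal_density"
    unfolding V_def using dW normal_standard_normal_convert[of "\<sigma> * r" W \<mu>] s r by simp
  have Vm[measurable]: "V \<in> borel_measurable M"
    using distributed_measurable[OF dV] by simp
  have dV': "distributed M lborel (\<lambda>y. - V y) std_normal_density"
    using std_neg[OF prob_space_axioms dV] .
  have DW: "D = {y \<in> space M. \<bar>W y - r\<^sup>2\<bar> \<le> \<sigma> * L * r}"
  proof -
    have "\<And>y. norm_n n (\<lambda>k. proj_n n u y k - u k) \<le> \<sigma> * L \<longleftrightarrow> \<bar>W y - r\<^sup>2\<bar> \<le> \<sigma> * L * r"
    proof -
      fix y
      have "norm_n n (\<lambda>k. proj_n n u y k - u k) = \<bar>W y / r\<^sup>2 - 1\<bar> * r"
        unfolding norm_proj W_def using r(2) unfolding r_def by simp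
      also have "\<dots> = \<bar>W y - r\<^sup>2\<bar> / r"
      proof -
        have "W y / r\<^sup>2 - 1 = (W y - r\<^sup>2) / r\<^sup>2" using r(1) by (simp add: field_simps)
        then show ?thesis using r(1) by (simp add: abs_div power2_eq_square)
      qed
      finally show "norm_n n (\<lambda>k. proj_n n u y k - u k) \<le> \<sigma> * L \<longleftrightarrow> \<bar>W y - r\<^sup>2\<bar> \<le> \<sigma> * L * r"
        using r by (simp add: divide_le_eq)
    qed
    then show ?thesis unfolding D M_def Rn_space by auto
  qed
  show "D \<in> sets (gauss_out n \<sigma> x)" unfolding M_def[symmetric] DW by measurable
  have P1: "measure M {y\<in>space M. V y \<le> - L} = Phi (- L)"
    by (rule std_le[OF prob_space_axioms dV])
  have P2: "measure M {y\<in>space M. - V y \<le> - L} = Phi (- L)"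
    by (rule std_le[OF prob_space_axioms dV'])
  have S1[measurable]: "{y\<in>space M. V y \<le> - L} \<in> sets M" by measurable
  have S2[measurable]: "{y\<in>space M. - V y \<le> - L} \<in> sets M" by measurable
  have SD[measurable]: "D \<in> sets M" unfolding DW by measurable
  {
    assume xu: "x = u"
    then have mu: "\<mu> = r\<^sup>2" unfolding \<mu>_def r by simp
    have sub: "space M - D \<subseteq> {y\<in>space M. V y \<le> - L} \<union> {y\<in>space M. - V y \<le> - L}"
    proof
      fix y assume y: "y \<in> space M - D"
      then have "\<bar>W y - r\<^sup>2\<bar> > \<sigma> * L * r" unfolding DW by auto
      then have "\<bar>V y\<bar> > L" unfolding V_def mu using s r
        by (simp add: abs_div pos_less_divide_eq mult.commute mult.left_commute)
      then show "y \<in> {y\<in>space M. V y \<le> - L} \<union> {y\<in>space M. - V y \<le> - L}" using y by auto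
    qed
    have "measure M (space M - D) \<le> measure M ({y\<in>space M. V y \<le> - L} \<union> {y\<in>space M. - V y \<le> - L})"
      by (rule finite_measure_mono[OF sub]) measurable
    also have "\<dots> \<le> Phi (- L) + Phi (- L)"
      using measure_subadditive[OF S1 S2] P1 P2 by simp
    finally have "measure M (space M - D) \<le> 2 * Phi (- L)" by simp
    moreover have "measure M (space M - D) = 1 - measure M D"
      using prob_compl[OF SD] .
    ultimately show "measure (gauss_out n \<sigma> x) D \<ge> 1 - 2 * Phi (- L)" unfolding M_def by simp
  }
  {
    assume h: "inner_n n u x \<le> inner_n n u u - 2 * \<sigma> * sqrt (inner_n n u u) * L"
    then have h': "\<mu> \<le> r\<^sup>2 - 2 * \<sigma> * r * L" unfolding \<mu>_def r(2) r_def[symmetric] .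
    have sub: "D \<subseteq> {y\<in>space M. - V y \<le> - L}"
    proof
      fix y assume y: "y \<in> D"
      then have "\<bar>W y - r\<^sup>2\<bar> \<le> \<sigma> * L * r" unfolding DW by auto
      then have "W y - \<mu> \<ge> \<sigma> * r * L" using h' by (auto simp: algebra_simps)
      then have "V y \<ge> L" unfolding V_def using s r
        by (simp add: pos_le_divide_eq mult.commute mult.left_commute)
      then show "y \<in> {y\<in>space M. - V y \<le> - L}" using y unfolding DW by auto
    qed
    have "measure M D \<le> Phi (- L)"
      using finite_measure_mono[OF sub S2] P2 by simp
    moreover have "Phi (- L) \<ge> 0" unfolding Phi_def by simp
    ultimately show "measure (gauss_out n \<sigma> x) D \<le> 2 * Phi (- L)" unfolding M_def by simp
  }
qed

lemma greedy:
  fixes X :: "'a set" and Rel :: "'a \<Rightarrow> 'a \<Rightarrow> bool"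
  assumes "finite X" "\<And>x y. Rel x y = Rel y x"
    "\<And>x. x \<in> X \<Longrightarrow> card {y\<in>X. Rel x y} \<le> K"
  shows "\<exists>C\<subseteq>X. card X \<le> (K + 1) * card C \<and> (\<forall>x\<in>C. \<forall>y\<in>C. x \<noteq> y \<longrightarrow> \<not> Rel x y)"
  using assms
proof (induction "card X" arbitrary: X rule: less_induct)
  case less
  show ?case
  proof (cases "X = {}")
    case True then show ?thesis by auto
  next
    case False
    then obtain x where x: "x \<in> X" by auto
    define X' where "X' = X - insert x {y\<in>X. Rel x y}"
    have fin': "finite X'" using less.prems(1) unfolding X'_def by auto
    have "card X \<le> card X' + card (insert x {y\<in>X. Rel x y})"
    proof -
      have "X \<subseteq> X' \<union> insert x {y\<in>X. Rel x y}" unfolding X'_def by auto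
      then have "card X \<le> card (X' \<union> insert x {y\<in>X. Rel x y})"
        using less.prems(1) fin' by (intro card_mono) auto
      also have "\<dots> \<le> card X' + card (insert x {y\<in>X. Rel x y})" by (rule card_Un_le)
      finally show ?thesis .
    qed
    also have "card (insert x {y\<in>X. Rel x y}) \<le> K + 1"
    proof -
      have "finite {y\<in>X. Rel x y}" using less.prems(1) by auto
      then show ?thesis using less.prems(3)[OF x] by (simp add: card_insert_if)
    qed
    finally have c1: "card X \<le> card X' + (K + 1)" by simp
    have lt: "card X' < card X"
      using less.prems(1) x unfolding X'_def by (intro psubset_card_mono) auto
    have "\<And>z. z \<in> X' \<Longrightarrow> card {y\<in>X'. Rel z y} \<le> K"
    proof -
      fix z assume z: "z \<in> X'"
      have "card {y\<in>X'. Rel z y} \<le> card {y\<in>X. Rel z y}"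
        using less.prems(1) unfolding X'_def by (intro card_mono) auto
      also have "\<dots> \<le> K" using less.prems(3) z unfolding X'_def by auto
      finally show "card {y\<in>X'. Rel z y} \<le> K" .
    qed
    then obtain C' where C': "C' \<subseteq> X'" "card X' \<le> (K + 1) * card C'"
      "\<forall>a\<in>C'. \<forall>b\<in>C'. a \<noteq> b \<longrightarrow> \<not> Rel a b"
      using less.hyps[OF lt fin' less.prems(2)] by blast
    have xC: "x \<notin> C'" using C'(1) unfolding X'_def by auto
    have finC: "finite C'" using C'(1) fin' finite_subset by blast
    show ?thesis
    proof (intro exI[of _ "insert x C'"] conjI)
      show "insert x C' \<subseteq> X" using C'(1) x unfolding X'_def by auto
      show "card X \<le> (K + 1) * card (insert x C')"
        using c1 C'(2) xC finC by simp
      show "\<forall>a\<in>insert x C'. \<forall>b\<in>insert x C'. a \<noteq> b \<longrightarrow> \<not> Rel a b"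
        using C'(3) C'(1) less.prems(2) unfolding X'_def by auto
    qed
  qed
qed

definition vecl :: "(nat \<times> int) list \<Rightarrow> nat \<Rightarrow> int" where
  "vecl xs = (\<lambda>i. sum_list (map (\<lambda>p. if fst p = i then snd p else 0) xs))"

lemma vecl_cons: "vecl (p # xs) = (\<lambda>i. (if fst p = i then snd p else 0) + vecl xs i)"
  unfolding vecl_def by simp

lemma ball_surj:
  assumes "n > 0"
  shows "\<And>z. (\<forall>i\<ge>n. z i = 0) \<Longrightarrow> (\<Sum>i<n. \<bar>z i\<bar>) \<le> int s \<Longrightarrow>
     z \<in> vecl ` {xs. set xs \<subseteq> {..<n} \<times> {-1,0,1} \<and> length xs = s}"
proof (induction s)
  case 0
  then have "\<forall>i<n. z i = 0" using sum_nonneg_eq_0_iff[of "{..<n}" "\<lambda>i. \<bar>z i\<bar>"]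
    by (simp add: order_antisym sum_nonneg)
  with 0 have "z = vecl []" unfolding vecl_def by (auto simp: fun_eq_iff not_less[symmetric])
  then show ?case by auto
next
  case (Suc s)
  show ?case
  proof (cases "(\<Sum>i<n. \<bar>z i\<bar>) \<le> int s")
    case True
    then obtain xs where xs: "set xs \<subseteq> {..<n} \<times> {-1,0,1}" "length xs = s" "z = vecl xs"
      using Suc.IH Suc.prems(1) by blast
    have "z = vecl ((0,0) # xs)" using xs(3) by (simp add: vecl_cons fun_eq_iff)
    then show ?thesis using xs assms by (auto intro!: image_eqI[of _ _ "(0,0) # xs"])
  next
    case False
    then have "(\<Sum>i<n. \<bar>z i\<bar>) > 0" by linarith
    then obtain i where i: "i < n" "z i \<noteq> 0"
      by (metis (no_types, lifting) abs_zero less_irrefl lessThan_iff sum.neutral)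
    define z' where "z' = z(i := z i - sgn (z i))"
    have "(\<Sum>j<n. \<bar>z' j\<bar>) = (\<Sum>j<n. \<bar>z j\<bar>) - 1"
    proof -
      have "(\<Sum>j<n. \<bar>z' j\<bar>) = \<bar>z' i\<bar> + (\<Sum>j\<in>{..<n}-{i}. \<bar>z' j\<bar>)"
        using i by (simp add: sum.remove)
      also have "(\<Sum>j\<in>{..<n}-{i}. \<bar>z' j\<bar>) = (\<Sum>j\<in>{..<n}-{i}. \<bar>z j\<bar>)"
        unfolding z'_def by (intro sum.cong) auto
      also have "\<bar>z' i\<bar> = \<bar>z i\<bar> - 1" unfolding z'_def using i(2)
        by (cases "z i > 0") (auto simp: sgn_if)
      also have "(\<Sum>j<n. \<bar>z j\<bar>) = \<bar>z i\<bar> + (\<Sum>j\<in>{..<n}-{i}. \<bar>z j\<bar>)"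
        using i by (simp add: sum.remove)
      ultimately show ?thesis by simp
    qed
    then have "(\<Sum>j<n. \<bar>z' j\<bar>) \<le> int s" using Suc.prems(2) by simp
    moreover have "\<forall>j\<ge>n. z' j = 0" using Suc.prems(1) i unfolding z'_def by auto
    ultimately obtain xs where xs: "set xs \<subseteq> {..<n} \<times> {-1,0,1}" "length xs = s" "z' = vecl xs"
      using Suc.IH by blast
    have "z = vecl ((i, sgn (z i)) # xs)"
    proof
      fix j
      have "z' j = vecl xs j" using xs(3) by simp
      then show "z j = vecl ((i, sgn (z i)) # xs) j" unfolding z'_def vecl_cons
        by (cases "j = i") auto
    qed
    moreover have "sgn (z i) \<in> {-1,0,1}" by (auto simp: sgn_if)
    ultimately show ?thesis using xs i by (auto intro!: image_eqI[of _ _ "(i, sgn (z i)) # xs"])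
  qed
qed

lemma ball_card:
  assumes "n > 0"
  shows "card {z::nat\<Rightarrow>int. (\<forall>i\<ge>n. z i = 0) \<and> (\<Sum>i<n. \<bar>z i\<bar>) \<le> int s} \<le> (3 * n) ^ s"
proof -
  let ?L = "{xs. set xs \<subseteq> {..<n} \<times> ({-1,0,1}::int set) \<and> length xs = s}"
  have fL: "finite ?L" by (intro finite_lists_length_eq) auto
  have "card {z::nat\<Rightarrow>int. (\<forall>i\<ge>n. z i = 0) \<and> (\<Sum>i<n. \<bar>z i\<bar>) \<le> int s} \<le> card (vecl ` ?L)"
    using ball_surj[OF assms] fL by (intro card_mono) auto
  also have "\<dots> \<le> card ?L" by (rule card_image_le[OF fL])
  also have "\<dots> = card ({..<n} \<times> ({-1,0,1}::int set)) ^ s"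
    by (intro card_lists_length_eq) auto
  also have "card ({..<n} \<times> ({-1,0,1}::int set)) = 3 * n" by (simp add: card_cartesian_product)
  finally show ?thesis by simp
qed

lemma abs_le_sq_int: "\<bar>k::int\<bar> \<le> k\<^sup>2"
proof (cases "k = 0")
  case False
  then have "1 \<le> \<bar>k\<bar>" by simp
  then have "\<bar>k\<bar> * 1 \<le> \<bar>k\<bar> * \<bar>k\<bar>" by (intro mult_left_mono) auto
  then show ?thesis by (simp add: power2_eq_square abs_mult_self_eq)
qed simp

lemma ball_finite:
  assumes "n > 0"
  shows "finite {z::nat\<Rightarrow>int. (\<forall>i\<ge>n. z i = 0) \<and> (\<Sum>i<n. \<bar>z i\<bar>) \<le> int s}"
proof -
  let ?L = "{xs. set xs \<subseteq> {..<n} \<times> ({-1,0,1}::int set) \<and> length xs = s}"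
  have fL: "finite ?L" by (intro finite_lists_length_eq) auto
  show ?thesis
    using ball_surj[OF assms] by (intro finite_subset[OF _ finite_imageI[OF fL]]) auto
qed

lemma pigeon:
  fixes g :: "'b \<Rightarrow> nat"
  assumes "finite T" "T \<noteq> {}" "c \<le> sum g T"
  shows "\<exists>S\<in>T. c \<le> card T * g S"
proof -
  have "\<exists>S. S \<in> T \<and> (\<forall>S'\<in>T. g S' \<le> g S)"
  proof -
    have "Max (g ` T) \<in> g ` T" using assms by (intro Max_in) auto
    then obtain S where "S \<in> T" "g S = Max (g ` T)" by auto
    then show ?thesis using assms(1) by (intro exI[of _ S]) auto
  qed
  then obtain S where S: "S \<in> T" "\<forall>S'\<in>T. g S' \<le> g S" by blast
  have "sum g T \<le> card T * g S" using sum_bounded_above[of T g "g S"] S by auto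
  then show ?thesis using S assms(3) by (meson le_trans)
qed

lemma construct:
  fixes P \<sigma> L :: real and n m R :: nat
  assumes P: "P > 0" and s: "\<sigma> > 0" and n: "n > 0" and m: "m \<ge> 1" and L: "L \<ge> 0"
    and R: "real R \<ge> 4 * \<sigma> * sqrt (real n * P) * L * real m ^ 2 / P"
  shows "\<exists>N u. N \<ge> 1 \<and> real m ^ n \<le> real N * (real n * real m ^ 2) * ((3 * real n) ^ R + 1) \<and>
     (\<forall>i<N. \<forall>k<n. u i k \<noteq> (0::real)) \<and> (\<forall>i<N. inner_n n (u i) (u i) = real n * P) \<and>
     (\<forall>i<N. \<forall>j<N. i \<noteq> j \<longrightarrow> inner_n n (u i) (u j) \<le> real n * P - 2 * \<sigma> * sqrt (real n * P) * L)"
proof -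
  define X where "X = PiE {..<n} (\<lambda>_. {1..int m})"
  have finX: "finite X" unfolding X_def by (rule finite_PiE) auto
  have cardX: "card X = m ^ n" unfolding X_def by (simp add: card_PiE)
  define sq where "sq x = (\<Sum>i<n. (x i)\<^sup>2 :: int)" for x :: "nat \<Rightarrow> int"
  define K where "K = n * m^2"
  define T where "T = {1..K}"
  have sqT: "nat (sq x) \<in> T \<and> int (nat (sq x)) = sq x" if "x \<in> X" for x
  proof -
    have b: "1 \<le> x i \<and> x i \<le> int m" if "i < n" for i using \<open>x \<in> X\<close> that unfolding X_def by (simp add: PiE_iff)
    have b0: "0 \<le> x i" if "i < n" for i using b[OF that] by linarith
    have A: "(\<Sum>i<n. (x i)\<^sup>2) \<le> (\<Sum>i<n. (int m)\<^sup>2)"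
      using b b0 by (intro sum_mono power_mono) auto
    have B: "(x 0)\<^sup>2 \<le> (\<Sum>i<n. (x i)\<^sup>2)"
      using n by (intro member_le_sum) auto
    have C: "1 \<le> (x 0)\<^sup>2" using b[of 0] n by (simp add: one_le_power)
    have E: "(\<Sum>i<n. (int m)\<^sup>2) = int K" unfolding K_def by simp
    have "1 \<le> sq x" "sq x \<le> int K" using A B C E unfolding sq_def by linarith+
    then show ?thesis unfolding T_def by auto
  qed
  have K1: "K \<ge> 1" unfolding K_def using n m by (simp add: Suc_le_eq)
  have finT: "finite T" "T \<noteq> {}" unfolding T_def using K1 by auto
  have cardT: "card T = K" unfolding T_def by simp
  define XS where "XS S = {x\<in>X. nat (sq x) = S}" for S
  have "card X \<le> (\<Sum>S\<in>T. card (XS S))"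
  proof -
    have "X = (\<Union>S\<in>T. XS S)" unfolding XS_def using sqT by blast
    then have "card X = card (\<Union>S\<in>T. XS S)" by simp
    also have "\<dots> \<le> (\<Sum>S\<in>T. card (XS S))" by (rule card_UN_le[OF finT(1)])
    finally show ?thesis .
  qed
  from pigeon[OF finT this] obtain S where S: "S \<in> T" "card X \<le> card T * card (XS S)" by blast
  have S1: "S \<ge> 1" "S \<le> K" using S(1) unfolding T_def by auto
  have XSsq: "sq x = int S" if "x \<in> XS S" for x using that sqT unfolding XS_def by force
  define Rel where "Rel x y = ((\<Sum>i<n. (x i - y i)\<^sup>2) < int R)" for x y :: "nat \<Rightarrow> int"
  define B where "B = {z::nat\<Rightarrow>int. (\<forall>i\<ge>n. z i = 0) \<and> (\<Sum>i<n. \<bar>z i\<bar>) \<le> int R}"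
  have finXS: "finite (XS S)" unfolding XS_def using finX by auto
  have "\<exists>C\<subseteq>XS S. card (XS S) \<le> ((3 * n) ^ R + 1) * card C \<and> (\<forall>x\<in>C. \<forall>y\<in>C. x \<noteq> y \<longrightarrow> \<not> Rel x y)"
  proof (rule greedy[OF finXS])
    show "Rel x y = Rel y x" for x y unfolding Rel_def
      by (intro arg_cong2[where f="(<)"] sum.cong refl) (simp add: power2_commute)
    fix x assume x: "x \<in> XS S"
    have "card {y \<in> XS S. Rel x y} \<le> card B"
    proof (rule card_inj_on_le)
      show "inj_on (\<lambda>y i. y i - x i) {y \<in> XS S. Rel x y}"
        unfolding inj_on_def by (auto simp: fun_eq_iff)
      show "finite B" unfolding B_def by (rule ball_finite[OF n])
      show "(\<lambda>y i. y i - x i) ` {y \<in> XS S. Rel x y} \<subseteq> B"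
      proof clarify
        fix y assume y: "y \<in> XS S" "Rel x y"
        have ex: "x \<in> extensional {..<n}" "y \<in> extensional {..<n}"
          using x y(1) unfolding XS_def X_def by (simp_all add: PiE_iff)
        have "\<forall>i\<ge>n. y i - x i = 0"
        proof (intro allI impI)
          fix i assume "i \<ge> n"
          then have "i \<notin> {..<n}" by simp
          then show "y i - x i = 0" using extensional_arb[OF ex(1)] extensional_arb[OF ex(2)] by simp
        qed
        moreover have "(\<Sum>i<n. \<bar>y i - x i\<bar>) \<le> int R"
        proof -
          have "(\<Sum>i<n. \<bar>y i - x i\<bar>) \<le> (\<Sum>i<n. (x i - y i)\<^sup>2)"
            by (intro sum_mono) (metis abs_le_sq_int abs_minus_commute)
          then show ?thesis using y(2) unfolding Rel_def by simp
        qed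
        ultimately show "(\<lambda>i. y i - x i) \<in> B" unfolding B_def by auto
      qed
    qed
    also have "\<dots> \<le> (3 * n) ^ R" unfolding B_def by (rule ball_card[OF n])
    finally show "card {y \<in> XS S. Rel x y} \<le> (3 * n) ^ R" .
  qed
  then obtain C where C: "C \<subseteq> XS S" "card (XS S) \<le> ((3 * n) ^ R + 1) * card C"
    "\<forall>x\<in>C. \<forall>y\<in>C. x \<noteq> y \<longrightarrow> \<not> Rel x y" by blast
  define N where "N = card C"
  have finC: "finite C" using C(1) finXS finite_subset by blast
  obtain h where h: "bij_betw h {0..<N} C" unfolding N_def using ex_bij_betw_nat_finite[OF finC] by blast
  have mn: "m ^ n \<le> (n * m^2) * (((3 * n) ^ R + 1) * N)"
  proof -
    have "m ^ n \<le> (n * m^2) * card (XS S)" using S(2) cardX cardT unfolding K_def by simp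
    also have "\<dots> \<le> (n * m^2) * (((3 * n) ^ R + 1) * N)" using C(2) unfolding N_def by simp
    finally show ?thesis .
  qed
  have N1: "N \<ge> 1"
  proof (rule ccontr)
    assume "\<not> N \<ge> 1" then have "N = 0" by simp
    then have "m ^ n \<le> 0" using mn by simp
    then show False using m by simp
  qed
  define t where "t = sqrt (real n * P / real S)"
  have t: "t > 0" unfolding t_def using P n S1 by auto
  have t2: "t\<^sup>2 * real S = real n * P" unfolding t_def using P n S1 by simp
  define u where "u i = (\<lambda>k. t * real_of_int (h i k))" for i
  have hC: "h i \<in> C" if "i < N" for i using h that by (auto simp: bij_betw_def)
  have hXS: "h i \<in> XS S" if "i < N" for i using hC[OF that] C(1) by blast
  have hX: "h i \<in> X" "sq (h i) = int S" if "i < N" for i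
    using hXS[OF that] XSsq[OF hXS[OF that]] unfolding XS_def by blast+
  have inner_u: "inner_n n (u i) (u j) = t\<^sup>2 * real_of_int (\<Sum>k<n. h i k * h j k)" for i j
    unfolding inner_n_def u_def by (simp add: sum_distrib_left power2_eq_square mult_ac)
  show ?thesis
  proof (intro exI[of _ N] exI[of _ u] conjI allI impI)
    show "N \<ge> 1" by (rule N1)
    have "real (m ^ n) \<le> real ((n * m^2) * (((3 * n) ^ R + 1) * N))" by (simp only: of_nat_le_iff mn)
    then show "real m ^ n \<le> real N * (real n * real m ^ 2) * ((3 * real n) ^ R + 1)"
      by (simp add: algebra_simps)
    fix i assume i: "i < N"
    show "\<And>k. k < n \<Longrightarrow> u i k \<noteq> 0"
    proof -
      fix k assume "k < n"
      then have "h i k \<ge> 1" using hX(1)[OF i] unfolding X_def by (simp add: PiE_iff)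
      then show "u i k \<noteq> 0" unfolding u_def using t by simp
    qed
    show "inner_n n (u i) (u i) = real n * P"
      unfolding inner_u using hX(2)[OF i] t2 by (simp add: sq_def power2_eq_square)
    fix j assume j: "j < N" and ij: "i \<noteq> j"
    have hij: "h i \<noteq> h j" using h i j ij unfolding bij_betw_def inj_on_def by auto
    then have nR: "\<not> Rel (h i) (h j)" using C(3) hC i j by blast
    have e: "(\<Sum>k<n. (h i k - h j k)\<^sup>2) = sq (h i) + sq (h j) - 2 * (\<Sum>k<n. h i k * h j k)"
      unfolding sq_def by (simp add: power2_diff sum.distrib sum_subtractf sum_distrib_left mult_ac)
    have "int R \<le> 2 * S - 2 * (\<Sum>k<n. h i k * h j k)"
      using nR e hX(2)[OF i] hX(2)[OF j] unfolding Rel_def by simp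
    then have key: "real R \<le> 2 * real S - 2 * real_of_int (\<Sum>k<n. h i k * h j k)" by linarith
    have "inner_n n (u i) (u j) = t\<^sup>2 * real_of_int (\<Sum>k<n. h i k * h j k)" by (rule inner_u)
    also have "\<dots> \<le> t\<^sup>2 * (real S - real R / 2)"
      using key t by (intro mult_left_mono) auto
    also have "\<dots> = real n * P - t\<^sup>2 * real R / 2" using t2 by (simp add: algebra_simps)
    finally have I1: "inner_n n (u i) (u j) \<le> real n * P - t\<^sup>2 * real R / 2" .
    have I2: "t\<^sup>2 * real R / 2 \<ge> 2 * \<sigma> * sqrt (real n * P) * L"
    proof -
      have Sm: "real S \<le> real n * real m ^ 2" using S1(2) unfolding K_def by (metis of_nat_le_iff of_nat_mult of_nat_power)
      have pos: "0 \<le> 4 * \<sigma> * sqrt (real n * P) * L" using s L P by simp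
      have "4 * \<sigma> * sqrt (real n * P) * L = t\<^sup>2 * (4 * \<sigma> * sqrt (real n * P) * L * real S / (real n * P))"
        using t2 P n by (simp add: field_simps)
      also have "\<dots> \<le> t\<^sup>2 * (4 * \<sigma> * sqrt (real n * P) * L * (real n * real m ^ 2) / (real n * P))"
        using Sm pos P n by (intro mult_left_mono divide_right_mono mult_left_mono) auto
      also have "\<dots> = t\<^sup>2 * (4 * \<sigma> * sqrt (real n * P) * L * real m ^ 2 / P)"
        using n by simp
      also have "\<dots> \<le> t\<^sup>2 * real R" using R by (intro mult_left_mono) auto
      finally show ?thesis by simp
    qed
    show "inner_n n (u i) (u j) \<le> real n * P - 2 * \<sigma> * sqrt (real n * P) * L" using I1 I2 by linarith
  qed
qed

lemma rate_bound:
  fixes P \<sigma> :: real and n m R N :: nat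
  assumes P: "P > 0" and s: "\<sigma> > 0" and n1: "n \<ge> 1"
    and L1: "log 2 (real n) \<ge> 1"
    and a2: "real n powr (1/4) / (log 2 (real n))\<^sup>2 \<ge> 2"
    and m: "m = nat \<lfloor>real n powr (1/4) / (log 2 (real n))\<^sup>2\<rfloor>"
    and R: "R = nat \<lceil>4 * \<sigma> * sqrt (real n * P) * log 2 (real n) * real m ^ 2 / P\<rceil>"
    and N1: "N \<ge> 1"
    and ineq: "real m ^ n \<le> real N * (real n * real m ^ 2) * ((3 * real n) ^ R + 1)"
  shows "real n * (log 2 (real n) / 4 - 2 * log 2 (log 2 (real n)) - 1) - 2 * log 2 (real n) - 1
     - (4 * \<sigma> / sqrt P * (real n / (log 2 (real n))^3) + 1) * log 2 (3 * real n) \<le> log 2 (real N)"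
proof -
  define L where "L = log 2 (real n)"
  define a where "a = real n powr (1/4) / L\<^sup>2"
  have n0: "real n > 0" using n1 by simp
  have L0: "L > 0" "L \<ge> 1" using L1 unfolding L_def by auto
  have a2': "a \<ge> 2" using a2 unfolding a_def L_def .
  have mfl: "real m = of_int \<lfloor>a\<rfloor>" unfolding m a_def L_def using a2 by simp
  have fc: "of_int \<lfloor>a\<rfloor> \<le> a" "a < of_int \<lfloor>a\<rfloor> + 1" using floor_correct[of a] by auto
  have ma: "real m \<le> a" "real m \<ge> a / 2" using mfl a2' fc by linarith+
  have mpos: "real m > 0" using ma a2' by simp
  have a_sq: "a\<^sup>2 = sqrt (real n) / L ^ 4"
  proof -
    have "(real n powr (1/4))\<^sup>2 = real n powr (1/2)"
      using n0 by (simp add: powr_powr[symmetric] power2_eq_square powr_add[symmetric])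
    also have "\<dots> = sqrt (real n)" using n0 by (simp add: powr_half_sqrt)
    finally show ?thesis unfolding a_def by (simp add: power_divide power_mult[symmetric])
  qed
  have m2: "real m ^ 2 \<le> sqrt (real n) / L ^ 4"
    using ma mpos a_sq by (metis power_mono less_imp_le)
  have sqn: "sqrt (real n) \<le> real n" using n1 by (simp add: real_sqrt_le_iff' power2_eq_square le_square)
  have L4: "L ^ 4 \<ge> 1" using L0 by simp
  have m2n: "real m ^ 2 \<le> real n"
  proof -
    have "sqrt (real n) * 1 \<le> sqrt (real n) * L ^ 4" using L4 by (intro mult_left_mono) auto
    then have "sqrt (real n) / L ^ 4 \<le> sqrt (real n)" using L4 by (simp add: divide_le_eq)
    then show ?thesis using m2 sqn by linarith
  qed
  define c where "c = 4 * \<sigma> / sqrt P"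
  have Rb: "real R \<le> c * (real n / L ^ 3) + 1"
  proof -
    define x where "x = 4 * \<sigma> * sqrt (real n * P) * L * real m ^ 2 / P"
    have x0: "x \<ge> 0" unfolding x_def using s P L0 by simp
    have "real R = of_int \<lceil>x\<rceil>" unfolding R x_def L_def using x0 unfolding x_def L_def by simp
    also have "\<dots> \<le> x + 1" by linarith
    also have "x \<le> 4 * \<sigma> * sqrt (real n * P) * L * (sqrt (real n) / L ^ 4) / P"
      unfolding x_def using m2 s P L0 by (intro divide_right_mono mult_left_mono) auto
    also have "\<dots> = c * (real n / L ^ 3)"
      unfolding c_def using P L0 n0
      by (simp add: real_sqrt_mult field_simps power_eq_if)
    finally show ?thesis by simp
  qed
  have l3n: "log 2 (3 * real n) \<ge> 0" using n1 by simp
  have lhs: "log 2 (real m ^ n) = real n * log 2 (real m)" using mpos by (simp add: log_nat_power)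
  have lm: "log 2 (real m) \<ge> L / 4 - 2 * log 2 L - 1"
  proof -
    have "log 2 (real m) \<ge> log 2 (a / 2)" using ma a2' by simp
    also have "log 2 (a / 2) = log 2 a - 1" using a2' by (simp add: log_divide)
    also have "log 2 a = L / 4 - 2 * log 2 L"
    proof -
      have "log 2 a = log 2 (real n powr (1/4)) - log 2 (L\<^sup>2)"
        unfolding a_def using n0 L0 by (intro log_divide_pos) auto
      moreover have "log 2 (real n powr (1/4)) = L / 4" using n0 unfolding L_def by (simp add: log_powr)
      moreover have "log 2 (L\<^sup>2) = 2 * log 2 L" using L0 by (simp add: log_nat_power)
      ultimately show ?thesis by simp
    qed
    finally show ?thesis by simp
  qed
  have T: "(3 * real n) ^ R + 1 \<le> 2 * (3 * real n) ^ R"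
  proof -
    have "1 \<le> 3 * real n" using n1 by simp
    then have "1 \<le> (3 * real n) ^ R" by (rule one_le_power)
    then show ?thesis by linarith
  qed
  have "real m ^ n \<le> real N * (real n * real m ^ 2) * (2 * (3 * real n) ^ R)"
    using ineq T N1 mpos n0 by (smt (verit) mult_left_mono mult_nonneg_nonneg of_nat_0_le_iff zero_le_power)
  then have "log 2 (real m ^ n) \<le> log 2 (real N * (real n * real m ^ 2) * (2 * (3 * real n) ^ R))"
    using mpos N1 n0 by (subst log_le_cancel_iff) auto
  also have "\<dots> = log 2 (real N) + (log 2 (real n) + 2 * log 2 (real m)) + (1 + real R * log 2 (3 * real n))"
    using mpos N1 n0 by (simp add: log_mult log_nat_power distrib_left)
  finally have main: "real n * log 2 (real m) \<le> log 2 (real N) + (L + 2 * log 2 (real m)) + (1 + real R * log 2 (3 * real n))"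
    unfolding lhs L_def .
  have "2 * log 2 (real m) \<le> L"
  proof -
    have "log 2 (real m ^ 2) \<le> log 2 (real n)" using m2n mpos n0 by (subst log_le_cancel_iff) auto
    then show ?thesis using mpos unfolding L_def by (simp add: log_nat_power)
  qed
  moreover have "real R * log 2 (3 * real n) \<le> (c * (real n / L ^ 3) + 1) * log 2 (3 * real n)"
    using Rb l3n by (rule mult_right_mono)
  moreover have "real n * (L / 4 - 2 * log 2 L - 1) \<le> real n * log 2 (real m)"
    using lm n0 by simp
  ultimately show ?thesis using main unfolding L_def[symmetric] c_def[symmetric] by linarith
qed

lemma Phi_mono: "s \<le> t \<Longrightarrow> Phi s \<le> Phi t"
proof -
  assume st: "s \<le> t"
  interpret prob_space "density lborel std_normal_density"
    by (rule prob_space_normal_density) simp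
  show ?thesis unfolding Phi_def
    using st by (intro finite_measure_mono) auto
qed

lemma Phi_nonneg: "Phi t \<ge> 0" unfolding Phi_def by simp

lemma Phi_lim_nat: "(\<lambda>k::nat. Phi (- real k)) \<longlonglongrightarrow> 0"
proof -
  interpret prob_space "density lborel std_normal_density"
    by (rule prob_space_normal_density) simp
  have "(\<lambda>k. measure (density lborel std_normal_density) {..- real k}) \<longlonglongrightarrow>
        measure (density lborel std_normal_density) (\<Inter>k. {..- real (k::nat)})"
    by (rule finite_Lim_measure_decseq) (auto simp: decseq_def)
  moreover have "(\<Inter>k. {..- real (k::nat)}) = {}"
  proof -
    have "x \<notin> (\<Inter>k. {..- real (k::nat)})" for x :: real
    proof -
      obtain k :: nat where "real k > - x" using reals_Archimedean2 by blast
      then have "\<not> x \<le> - real k" by linarith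
      then show ?thesis by blast
    qed
    then show ?thesis by blast
  qed
  ultimately show ?thesis unfolding Phi_def by simp
qed

lemma Phi_lim: "(\<lambda>n::nat. 2 * Phi (- log 2 (real n))) \<longlonglongrightarrow> 0"
proof -
  have "(\<lambda>n::nat. Phi (- log 2 (real n))) \<longlonglongrightarrow> 0"
  proof (rule tendstoI)
    fix e :: real assume e: "e > 0"
    from Phi_lim_nat[THEN tendstoD, OF e] obtain k :: nat where k: "dist (Phi (- real k)) 0 < e"
      by (auto simp: eventually_sequentially)
    have "filterlim (\<lambda>n::nat. log 2 (real n)) at_top sequentially" by real_asymp
    then have "\<forall>\<^sub>F n in sequentially. log 2 (real n) \<ge> real k"
      by (simp add: filterlim_at_top)
    then show "\<forall>\<^sub>F n in sequentially. dist (Phi (- log 2 (real n))) 0 < e"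
    proof (rule eventually_mono)
      fix n assume "log 2 (real n) \<ge> real k"
      then have "Phi (- log 2 (real n)) \<le> Phi (- real k)" by (intro Phi_mono) simp
      then show "dist (Phi (- log 2 (real n))) 0 < e" using k Phi_nonneg[of "- log 2 (real n)"]
        Phi_nonneg[of "- real k"] by (simp add: dist_real_def)
    qed
  qed
  then show ?thesis using tendsto_mult_right_zero[of _ sequentially 2] by (simp add: tendsto_mult_left_zero)
qed

lemma angle_ineq:
  fixes r ip \<sigma> L :: real
  assumes "r > 0" "ip \<le> r\<^sup>2 - 2 * \<sigma> * r * L"
  shows "\<bar>ip / r\<^sup>2 - 1\<bar> * r \<ge> 2 * \<sigma> * L"
proof -
  have "(1 - ip / r\<^sup>2) * r = (r\<^sup>2 - ip) / r" using assms(1) by (simp add: field_simps power2_eq_square)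
  also have "\<dots> \<ge> 2 * \<sigma> * L" using assms by (simp add: le_divide_eq algebra_simps power2_eq_square)
  finally have "(1 - ip / r\<^sup>2) * r \<ge> 2 * \<sigma> * L" .
  moreover have "\<bar>ip / r\<^sup>2 - 1\<bar> * r \<ge> (1 - ip / r\<^sup>2) * r" using assms(1)
    by (intro mult_right_mono) auto
  ultimately show ?thesis by linarith
qed

lemma code_props:
  fixes P \<sigma> L :: real and n N :: nat and u :: "nat \<Rightarrow> nat \<Rightarrow> real"
  assumes P: "P > 0" and s: "\<sigma> > 0" and n: "n > 0" and L: "L \<ge> 0"
    and nz: "\<forall>i<N. \<forall>k<n. u i k \<noteq> 0"
    and ii: "\<forall>i<N. inner_n n (u i) (u i) = real n * P"
    and ij: "\<forall>i<N. \<forall>j<N. i \<noteq> j \<longrightarrow> inner_n n (u i) (u j) \<le> real n * P - 2 * \<sigma> * sqrt (real n * P) * L"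
    and D: "D = (\<lambda>i. {y \<in> Rn n. norm_n n (\<lambda>k. proj_n n (u i) y k - u i k) \<le> \<sigma> * L})"
  shows "DI_code n P \<sigma> N (2 * Phi (- L)) (2 * Phi (- L)) u D \<and>
     (\<forall>i<N. norm_n n (u i) = sqrt (real n * P)) \<and>
     angle_dense n N u (2 * \<sigma> * L) \<and>
     (\<forall>i<N. D i = {y \<in> Rn n. norm_n n (\<lambda>k. proj_n n (u i) y k - u i k) \<le> \<sigma> * L})"
proof (intro conjI)
  have nP: "real n * P > 0" using n P by simp
  show nrm: "\<forall>i<N. norm_n n (u i) = sqrt (real n * P)" using ii unfolding norm_n_def by simp
  show "\<forall>i<N. D i = {y \<in> Rn n. norm_n n (\<lambda>k. proj_n n (u i) y k - u i k) \<le> \<sigma> * L}"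
    using D by simp
  have dec: "D i \<in> sets (gauss_out n \<sigma> x) \<and>
     (x = u i \<longrightarrow> measure (gauss_out n \<sigma> x) (D i) \<ge> 1 - 2 * Phi (- L)) \<and>
     (inner_n n (u i) x \<le> inner_n n (u i) (u i) - 2 * \<sigma> * sqrt (inner_n n (u i) (u i)) * L \<longrightarrow>
           measure (gauss_out n \<sigma> x) (D i) \<le> 2 * Phi (- L))" if i: "i < N" for i x
  proof -
    have nzi: "\<And>k. k < n \<Longrightarrow> u i k \<noteq> 0" using nz i by blast
    have Di: "D i = {y \<in> Rn n. norm_n n (\<lambda>k. proj_n n (u i) y k - u i k) \<le> \<sigma> * L}" using D by simp
    show ?thesis using decode[OF s n nzi L Di] by blast
  qed
  show "DI_code n P \<sigma> N (2 * Phi (- L)) (2 * Phi (- L)) u D"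
    unfolding DI_code_def
  proof (intro conjI allI impI)
    fix i assume i: "i < N"
    show "(norm_n n (u i))\<^sup>2 \<le> real n * P" using nrm i nP by simp
    show "D i \<in> sets (gauss_out n \<sigma> (u i))" using dec[OF i] by blast
    show "measure (gauss_out n \<sigma> (u i)) (D i) \<ge> 1 - 2 * Phi (- L)" using dec[OF i] by blast
    fix j assume j: "j < N" and ij': "i \<noteq> j"
    have "inner_n n (u i) (u j) \<le> inner_n n (u i) (u i) - 2 * \<sigma> * sqrt (inner_n n (u i) (u i)) * L"
      using ij i j ij' ii by simp
    then show "measure (gauss_out n \<sigma> (u j)) (D i) \<le> 2 * Phi (- L)" using dec[OF i, of "u j"] by blast
  qed
  show "angle_dense n N u (2 * \<sigma> * L)"
    unfolding angle_dense_def
  proof (intro allI impI)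
    fix j k assume j: "j < N" and k: "k < N" and jk: "j \<noteq> k"
    define r where "r = sqrt (real n * P)"
    have r: "r > 0" "r\<^sup>2 = real n * P" unfolding r_def using nP by auto
    have "inner_n n (u k) (u j) \<le> r\<^sup>2 - 2 * \<sigma> * r * L" using ij j k jk r unfolding r_def by simp
    then have "\<bar>inner_n n (u k) (u j) / r\<^sup>2 - 1\<bar> * r \<ge> 2 * \<sigma> * L" by (rule angle_ineq[OF r(1)])
    moreover have "norm_n n (\<lambda>i. proj_n n (u k) (u j) i - u k i) = \<bar>inner_n n (u k) (u j) / r\<^sup>2 - 1\<bar> * r"
      unfolding norm_proj using ii k r unfolding r_def by simp
    ultimately show "2 * \<sigma> * L \<le> norm_n n (\<lambda>i. proj_n n (u k) (u j) i - u k i)" by simp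
  qed
qed

theorem theorem1:
  fixes P \<sigma> :: real
  assumes "P > 0" and "\<sigma> > 0"
  shows "(\<exists>(Nf :: nat \<Rightarrow> nat) (uf :: nat \<Rightarrow> nat \<Rightarrow> nat \<Rightarrow> real)
            (Df :: nat \<Rightarrow> nat \<Rightarrow> (nat \<Rightarrow> real) set).
            (\<forall>\<^sub>F n in sequentially.
               DI_code n P \<sigma> (Nf n) (2 * Phi (- log 2 (real n))) (2 * Phi (- log 2 (real n)))
                 (uf n) (Df n) \<and>
               (\<forall>i<Nf n. norm_n n (uf n i) = sqrt (real n * P)) \<and>
               angle_dense n (Nf n) (uf n) (2 * \<sigma> * log 2 (real n)) \<and>
               (\<forall>i<Nf n. Df n i = {y \<in> Rn n.
                   norm_n n (\<lambda>k. proj_n n (uf n i) y k - uf n i k) \<le> \<sigma> * log 2 (real n)})) \<and>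
            (\<forall>\<epsilon>>0. \<forall>\<^sub>F n in sequentially.
               log 2 (real (Nf n)) / (real n * log 2 (real n)) \<ge> 1/4 - \<epsilon>))
         \<and> achievable_lin_rate P \<sigma> (1/4)"
proof -
  note P = assms(1) and s = assms(2)
  define Lf where "Lf n = log 2 (real n)" for n :: nat
  define af where "af n = real n powr (1/4) / (Lf n)\<^sup>2" for n :: nat
  define mf where "mf n = nat \<lfloor>af n\<rfloor>" for n
  define Rf where "Rf n = nat \<lceil>4 * \<sigma> * sqrt (real n * P) * Lf n * real (mf n) ^ 2 / P\<rceil>" for n
  define c where "c = 4 * \<sigma> / sqrt P"
  define g where "g n = real n * (Lf n / 4 - 2 * log 2 (Lf n) - 1) - 2 * Lf n - 1
     - (c * (real n / (Lf n)^3) + 1) * log 2 (3 * real n)" for n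
  have ev1: "\<forall>\<^sub>F n in sequentially. Lf n \<ge> 1"
  proof -
    have "filterlim (\<lambda>n::nat. log 2 (real n)) at_top sequentially" by real_asymp
    then show ?thesis unfolding Lf_def by (simp add: filterlim_at_top)
  qed
  have ev2: "\<forall>\<^sub>F n in sequentially. af n \<ge> 2"
  proof -
    have "filterlim (\<lambda>n::nat. real n powr (1/4) / (log 2 n)^2) at_top sequentially" by real_asymp
    then show ?thesis unfolding af_def Lf_def by (simp add: filterlim_at_top)
  qed
  have ev3: "\<forall>\<^sub>F n in sequentially. n \<ge> 1" by (simp add: eventually_ge_at_top)
  from eventually_conj[OF ev3 eventually_conj[OF ev1 ev2]] obtain n0 where
    n0: "\<And>n. n \<ge> n0 \<Longrightarrow> n \<ge> 1 \<and> Lf n \<ge> 1 \<and> af n \<ge> 2"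
    unfolding eventually_sequentially by blast
  define Good where "Good n N u \<longleftrightarrow> N \<ge> 1 \<and> (\<forall>i<N. \<forall>k<n. u i k \<noteq> (0::real)) \<and>
     (\<forall>i<N. inner_n n (u i) (u i) = real n * P) \<and>
     (\<forall>i<N. \<forall>j<N. i \<noteq> j \<longrightarrow> inner_n n (u i) (u j) \<le> real n * P - 2 * \<sigma> * sqrt (real n * P) * Lf n) \<and>
     g n \<le> log 2 (real N)" for n N u
  have good: "\<exists>N u. Good n N u" if nn: "n \<ge> n0" for n
  proof -
    have h: "n \<ge> 1" "Lf n \<ge> 1" "af n \<ge> 2" using n0[OF nn] by auto
    have m1: "mf n \<ge> 1" unfolding mf_def using h(3) by linarith
    have Rge: "real (Rf n) \<ge> 4 * \<sigma> * sqrt (real n * P) * Lf n * real (mf n) ^ 2 / P"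
      unfolding Rf_def by linarith
    obtain N u where Nu: "N \<ge> 1" "real (mf n) ^ n \<le> real N * (real n * real (mf n) ^ 2) * ((3 * real n) ^ Rf n + 1)"
      "\<forall>i<N. \<forall>k<n. u i k \<noteq> (0::real)" "\<forall>i<N. inner_n n (u i) (u i) = real n * P"
      "\<forall>i<N. \<forall>j<N. i \<noteq> j \<longrightarrow> inner_n n (u i) (u j) \<le> real n * P - 2 * \<sigma> * sqrt (real n * P) * Lf n"
      using construct[OF P s _ m1 _ Rge] h by auto
    have "g n \<le> log 2 (real N)"
      unfolding g_def c_def
      using rate_bound[OF P s h(1) _ _ _ _ Nu(1) Nu(2)] h unfolding mf_def Rf_def af_def Lf_def
      by blast
    then show ?thesis unfolding Good_def using Nu by blast
  qed
  have "\<forall>n. \<exists>p. n \<ge> n0 \<longrightarrow> Good n (fst p) (snd p)" using good by fastforce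
  then obtain F where F: "\<And>n. n \<ge> n0 \<Longrightarrow> Good n (fst (F n)) (snd (F n))" by metis
  define Nf where "Nf n = fst (F n)" for n
  define uf where "uf n = snd (F n)" for n
  define Df where "Df n = (\<lambda>i. {y \<in> Rn n. norm_n n (\<lambda>k. proj_n n (uf n i) y k - uf n i k) \<le> \<sigma> * log 2 (real n)})" for n
  have props: "DI_code n P \<sigma> (Nf n) (2 * Phi (- log 2 (real n))) (2 * Phi (- log 2 (real n)))
                 (uf n) (Df n) \<and>
               (\<forall>i<Nf n. norm_n n (uf n i) = sqrt (real n * P)) \<and>
               angle_dense n (Nf n) (uf n) (2 * \<sigma> * log 2 (real n)) \<and>
               (\<forall>i<Nf n. Df n i = {y \<in> Rn n.
                   norm_n n (\<lambda>k. proj_n n (uf n i) y k - uf n i k) \<le> \<sigma> * log 2 (real n)})"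
    if nn: "n \<ge> n0" for n
  proof -
    have G: "Good n (Nf n) (uf n)" using F[OF nn] unfolding Nf_def uf_def .
    have h: "n \<ge> 1" "Lf n \<ge> 1" using n0[OF nn] by auto
    show ?thesis
      using code_props[OF P s _ _ _ _ _ Df_def[of n], where N="Nf n"] G h unfolding Good_def Lf_def
      by auto
  qed
  have rate: "\<forall>\<^sub>F n in sequentially. log 2 (real (Nf n)) / (real n * log 2 (real n)) \<ge> 1/4 - \<epsilon>"
    if e: "\<epsilon> > 0" for \<epsilon>
  proof -
    have A: "((\<lambda>n::nat. (real n * ((1/4) * log 2 n - 2 * log 2 (log 2 n) - 1) - 2 * log 2 n - log 2 (3 * real n) - 1) / (real n * log 2 n)) \<longlongrightarrow> 1/4) sequentially"
      by real_asymp
    have B: "((\<lambda>n::nat. (real n / ((log 2 n)^3)) * log 2 (3 * real n) / (real n * log 2 n)) \<longlongrightarrow> 0) sequentially"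
      by real_asymp
    have eq: "g n / (real n * log 2 (real n)) =
      (real n * ((1/4) * log 2 n - 2 * log 2 (log 2 n) - 1) - 2 * log 2 n - log 2 (3 * real n) - 1) / (real n * log 2 n)
      - c * ((real n / ((log 2 n)^3)) * log 2 (3 * real n) / (real n * log 2 n))" for n
    proof -
      define X where "X = real n * ((1/4) * log 2 n - 2 * log 2 (log 2 n) - 1) - 2 * log 2 n - log 2 (3 * real n) - 1"
      define Y where "Y = (real n / ((log 2 n)^3)) * log 2 (3 * real n)"
      define Z where "Z = real n * log 2 (real n)"
      have "g n = X - c * Y" unfolding g_def Lf_def X_def Y_def by (simp add: algebra_simps)
      then have "g n / Z = X / Z - c * (Y / Z)" by (simp add: diff_divide_distrib)
      then show ?thesis unfolding X_def Y_def Z_def .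
    qed
    have "((\<lambda>n. g n / (real n * log 2 (real n))) \<longlongrightarrow> 1/4 - c * 0) sequentially"
      unfolding eq by (intro tendsto_diff tendsto_mult A B tendsto_const)
    then have "\<forall>\<^sub>F n in sequentially. g n / (real n * log 2 (real n)) > 1/4 - \<epsilon>"
      using e by (intro order_tendstoD) auto
    moreover have "\<forall>\<^sub>F n in sequentially. n \<ge> n0" by (simp add: eventually_ge_at_top)
    ultimately show ?thesis
    proof eventually_elim
      case (elim n)
      have G: "Good n (Nf n) (uf n)" using F[OF elim(2)] unfolding Nf_def uf_def .
      have h: "n \<ge> 1" "Lf n \<ge> 1" using n0[OF elim(2)] by auto
      have pos: "real n * log 2 (real n) > 0" using h unfolding Lf_def by simp
      have "g n / (real n * log 2 (real n)) \<le> log 2 (real (Nf n)) / (real n * log 2 (real n))"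
        using G pos unfolding Good_def by (intro divide_right_mono) auto
      then show ?case using elim(1) by linarith
    qed
  qed
  have part1: "\<exists>(Nf :: nat \<Rightarrow> nat) (uf :: nat \<Rightarrow> nat \<Rightarrow> nat \<Rightarrow> real)
            (Df :: nat \<Rightarrow> nat \<Rightarrow> (nat \<Rightarrow> real) set).
            (\<forall>\<^sub>F n in sequentially.
               DI_code n P \<sigma> (Nf n) (2 * Phi (- log 2 (real n))) (2 * Phi (- log 2 (real n)))
                 (uf n) (Df n) \<and>
               (\<forall>i<Nf n. norm_n n (uf n i) = sqrt (real n * P)) \<and>
               angle_dense n (Nf n) (uf n) (2 * \<sigma> * log 2 (real n)) \<and>
               (\<forall>i<Nf n. Df n i = {y \<in> Rn n.
                   norm_n n (\<lambda>k. proj_n n (uf n i) y k - uf n i k) \<le> \<sigma> * log 2 (real n)})) \<and>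
            (\<forall>\<epsilon>>0. \<forall>\<^sub>F n in sequentially.
               log 2 (real (Nf n)) / (real n * log 2 (real n)) \<ge> 1/4 - \<epsilon>)"
  proof (intro exI[of _ Nf] exI[of _ uf] exI[of _ Df] conjI allI impI)
    show "\<forall>\<^sub>F n in sequentially.
               DI_code n P \<sigma> (Nf n) (2 * Phi (- log 2 (real n))) (2 * Phi (- log 2 (real n)))
                 (uf n) (Df n) \<and>
               (\<forall>i<Nf n. norm_n n (uf n i) = sqrt (real n * P)) \<and>
               angle_dense n (Nf n) (uf n) (2 * \<sigma> * log 2 (real n)) \<and>
               (\<forall>i<Nf n. Df n i = {y \<in> Rn n.
                   norm_n n (\<lambda>k. proj_n n (uf n i) y k - uf n i k) \<le> \<sigma> * log 2 (real n)})"
      unfolding eventually_sequentially using props by blast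
    fix \<epsilon> :: real assume "\<epsilon> > 0"
    then show "\<forall>\<^sub>F n in sequentially. log 2 (real (Nf n)) / (real n * log 2 (real n)) \<ge> 1/4 - \<epsilon>"
      by (rule rate)
  qed
  have part2: "achievable_lin_rate P \<sigma> (1/4)"
    unfolding achievable_lin_rate_def
  proof (intro conjI allI impI)
    show "(1/4::real) > 0" by simp
    fix \<epsilon> :: real assume e: "\<epsilon> > 0"
    from rate[OF e] obtain n1 where n1: "\<And>n. n \<ge> n1 \<Longrightarrow> log 2 (real (Nf n)) / (real n * log 2 (real n)) \<ge> 1/4 - \<epsilon>"
      unfolding eventually_sequentially by blast
    show "\<exists>n0 (l1::nat\<Rightarrow>real) (l2::nat\<Rightarrow>real).
        l1 \<longlonglongrightarrow> 0 \<and> l2 \<longlonglongrightarrow> 0 \<and>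
        (\<forall>n\<ge>n0. \<exists>N u D. DI_code n P \<sigma> N (l1 n) (l2 n) u D \<and>
           log 2 (real N) / (real n * log 2 (real n)) \<ge> 1/4 - \<epsilon>)"
    proof (rule exI[of _ "max n0 n1"], rule exI[of _ "\<lambda>n. 2 * Phi (- log 2 (real n))"],
        rule exI[of _ "\<lambda>n. 2 * Phi (- log 2 (real n))"], intro conjI allI impI)
      show "(\<lambda>n. 2 * Phi (- log 2 (real n))) \<longlonglongrightarrow> 0" by (rule Phi_lim)
      show "(\<lambda>n. 2 * Phi (- log 2 (real n))) \<longlonglongrightarrow> 0" by (rule Phi_lim)
      fix n assume "max n0 n1 \<le> n"
      then have nn: "n \<ge> n0" "n \<ge> n1" by auto
      show "\<exists>N u D. DI_code n P \<sigma> N ((\<lambda>n. 2 * Phi (- log 2 (real n))) n) ((\<lambda>n. 2 * Phi (- log 2 (real n))) n) u D \<and>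
           log 2 (real N) / (real n * log 2 (real n)) \<ge> 1/4 - \<epsilon>"
        using props[OF nn(1)] n1[OF nn(2)] by blast
    qed
  qed
  show ?thesis using part1 part2 by blast
qed

end
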